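(* Let $I\subset\mathcal U$ be a two-sided ideal containing $I_{\mathrm C}$. Then the elements $h_1(\mathbf u),h_2(\mathbf u),\dots$ commute pairwise modulo $I$. Consequently $H(x)H(y)\equiv H(y)H(x)\bmod I[[x,y]]$, where $H(x)=\sum_{\ell\ge0}x^\ell h_\ell(\mathbf u)$ and $x,y$ are formal variables commuting with each other and with $u_1,\dots,u_N$.
   Context: $\mathcal U=\mathbb Z\langle u_1,\dots,u_N\rangle$ is the free associative ring. $h_\ell(\mathbf u)=\sum_{1\le i_1\le\cdots\le i_\ell\le N}u_{i_1}\cdots u_{i_\ell}$ for $\ell>0$, $h_0=1$. $I_{\mathrm C}$ is the two-sided ideal generated by $u_b^2u_a+u_au_bu_a-u_bu_au_b-u_bu_a^2$ ($a<b$), $u_bu_cu_a+u_au_cu_b-u_bu_au_c-u_cu_au_b$ ($a<b<c$), $u_cu_bu_cu_a+u_bu_cu_au_c-u_cu_bu_au_c-u_bu_c^2u_a$ ($a<b<c$). *)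

theory Defs
  imports Main "HOL-Library.Poly_Mapping" "HOL-Computational_Algebra.Formal_Power_Series"
begin

datatype 'n fword = Word "'n list"

instantiation fword :: (type) monoid_add
begin
definition zero_fword :: "'n fword" where "zero_fword = Word []"
fun plus_fword :: "'n fword \<Rightarrow> 'n fword \<Rightarrow> 'n fword" where
  "plus_fword (Word xs) (Word ys) = Word (xs @ ys)"
instance
proof
  fix a b c :: "'n fword"
  show "a + b + c = a + (b + c)" by (cases a; cases b; cases c) simp
  show "0 + a = a" by (cases a) (simp add: zero_fword_def)
  show "a + 0 = a" by (cases a) (simp add: zero_fword_def)
qed
end

text \<open>The free associative ring Z<u_i : i in 'n>: finitely supported integer
  combinations of words, with convolution product. The index type 'n is finite
  and linearly ordered (N = CARD('n)).\<close>
type_synonym 'n freering = "'n fword \<Rightarrow>\<^sub>0 int"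

definition u :: "'n \<Rightarrow> 'n freering" where
  "u i = Poly_Mapping.single (Word [i]) 1"

definition hsym :: "nat \<Rightarrow> ('n::{finite,linorder}) freering" where
  "hsym l = (\<Sum>xs\<in>{xs :: 'n list. length xs = l \<and> sorted xs}. prod_list (map u xs))"

definition two_sided_ideal :: "('a::ring_1) set \<Rightarrow> bool" where
  "two_sided_ideal I \<longleftrightarrow> 0 \<in> I \<and> (\<forall>x\<in>I. \<forall>y\<in>I. x + y \<in> I) \<and> (\<forall>x\<in>I. - x \<in> I)
     \<and> (\<forall>x\<in>I. \<forall>a b. a * x * b \<in> I)"

definition gensC :: "('n::linorder) freering set" where
  "gensC =
     {u b * u b * u a + u a * u b * u a - u b * u a * u b - u b * u a * u a | a b. a < b}
   \<union> {u b * u c * u a + u a * u c * u b - u b * u a * u c - u c * u a * u b | a b c. a < b \<and> b < c}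
   \<union> {u c * u b * u c * u a + u b * u c * u a * u c - u c * u b * u a * u c - u b * u c * u c * u a
       | a b c. a < b \<and> b < c}"

definition I_C :: "('n::linorder) freering set" where
  "I_C = \<Inter>{J. two_sided_ideal J \<and> gensC \<subseteq> J}"

text \<open>H(x) and H(y) as bivariate power series in x (outer) and y (inner) over the free ring.\<close>
definition Hx :: "('n::{finite,linorder}) freering fps fps" where
  "Hx = Abs_fps (\<lambda>l. fps_const (hsym l))"

definition Hy :: "('n::{finite,linorder}) freering fps fps" where
  "Hy = fps_const (Abs_fps hsym)"

end

theory Submission
  imports Defs "HOL-Computational_Algebra.Formal_Power_Series"
begin

lemma ideal_Inter: "(\<And>J. J \<in> F \<Longrightarrow> two_sided_ideal J) \<Longrightarrow> two_sided_ideal (\<Inter>F)"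
  unfolding two_sided_ideal_def by blast
lemma I_C_ideal: "two_sided_ideal (I_C :: ('n::linorder) freering set)"
  unfolding I_C_def by (rule ideal_Inter) blast
lemma gensC_sub: "gensC \<subseteq> (I_C :: ('n::linorder) freering set)"
  unfolding I_C_def by auto
lemma word_empty_plus: "(Word [] = l + q) \<longleftrightarrow> l = Word [] \<and> q = Word []"
  by (cases l; cases q) auto

lemma lookup_mult_empty:
  fixes f g :: "'n freering"
  shows "Poly_Mapping.lookup (f * g) (Word []) = Poly_Mapping.lookup f (Word []) * Poly_Mapping.lookup g (Word [])"
proof -
  have "(\<lambda>l. Poly_Mapping.lookup f l * (\<Sum>q. Poly_Mapping.lookup g q when Word [] = l + q))
      = (\<lambda>l. Poly_Mapping.lookup f l * Poly_Mapping.lookup g (Word []) when l = Word [])"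
  proof
    fix l
    have "(\<lambda>q. Poly_Mapping.lookup g q when Word [] = l + q) = (\<lambda>q. (Poly_Mapping.lookup g q when l = Word []) when q = Word [])"
      by (auto simp: word_empty_plus when_def)
    then have "(\<Sum>q. Poly_Mapping.lookup g q when Word [] = l + q) = (\<Sum>q. (Poly_Mapping.lookup g q when l = Word []) when q = Word [])"
      by (rule arg_cong)
    also have "\<dots> = (Poly_Mapping.lookup g (Word []) when l = Word [])"
      by (rule Sum_any_when_equal)
    finally show "Poly_Mapping.lookup f l * (\<Sum>q. Poly_Mapping.lookup g q when Word [] = l + q) = (Poly_Mapping.lookup f l * Poly_Mapping.lookup g (Word []) when l = Word [])"
      by (simp add: when_def)
  qed
  then have "(\<Sum>l. Poly_Mapping.lookup f l * (\<Sum>q. Poly_Mapping.lookup g q when Word [] = l + q))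
      = (\<Sum>l. Poly_Mapping.lookup f l * Poly_Mapping.lookup g (Word []) when l = Word [])"
    by (rule arg_cong)
  then show ?thesis by (simp add: lookup_mult)
qed

lemma lookup_u_empty: "Poly_Mapping.lookup (u a) (Word []) = 0"
  by (simp add: u_def lookup_single)

lemma one_notin_IC: "(1 :: ('n::linorder) freering) \<notin> I_C"
proof
  assume 1: "(1 :: 'n freering) \<in> I_C"
  let ?J = "{p :: 'n freering. Poly_Mapping.lookup p (Word []) = 0}"
  have "two_sided_ideal ?J"
    unfolding two_sided_ideal_def by (simp add: lookup_add lookup_mult_empty)
  moreover have "gensC \<subseteq> ?J"
    unfolding gensC_def by (auto simp: lookup_add lookup_minus lookup_mult_empty lookup_u_empty)
  ultimately have "I_C \<subseteq> ?J" unfolding I_C_def by blast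
  with 1 have "Poly_Mapping.lookup (1 :: 'n freering) (Word []) = 0" by blast
  then show False by (simp add: lookup_one zero_fword_def)
qed

definition congC :: "('n::linorder) freering \<Rightarrow> 'n freering \<Rightarrow> bool" where
  "congC a b \<longleftrightarrow> a - b \<in> I_C"
lemma IC_add: "x \<in> I_C \<Longrightarrow> y \<in> I_C \<Longrightarrow> x + y \<in> I_C"
  using I_C_ideal unfolding two_sided_ideal_def by blast
lemma IC_uminus: "x \<in> I_C \<Longrightarrow> - x \<in> I_C"
  using I_C_ideal unfolding two_sided_ideal_def by blast
lemma IC_0: "0 \<in> I_C"
  using I_C_ideal unfolding two_sided_ideal_def by blast
lemma IC_mult: "x \<in> I_C \<Longrightarrow> a * x * b \<in> I_C"
  using I_C_ideal unfolding two_sided_ideal_def by blast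
lemma IC_multL: "x \<in> I_C \<Longrightarrow> a * x \<in> I_C"
  using IC_mult[of x a 1] by simp
lemma IC_multR: "x \<in> I_C \<Longrightarrow> x * b \<in> I_C"
  using IC_mult[of x 1 b] by simp
lemma IC_diff: "x \<in> I_C \<Longrightarrow> y \<in> I_C \<Longrightarrow> x - y \<in> I_C"
  using IC_add[OF _ IC_uminus] by (metis diff_conv_add_uminus)
lemma equivp_congC: "equivp congC"
proof (rule equivpI)
  show "reflp congC" by (rule reflpI) (simp add: congC_def IC_0)
  show "symp congC"
  proof (rule sympI)
    fix a b assume "congC a b"
    then have "- (a - b) \<in> I_C" by (metis congC_def IC_uminus)
    then show "congC b a" by (simp add: congC_def)
  qed
  show "transp congC"
  proof (rule transpI)
    fix a b c assume "congC a b" "congC b c"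
    then have "(a - b) + (b - c) \<in> I_C" by (metis congC_def IC_add)
    then show "congC a c" by (simp add: congC_def)
  qed
qed
quotient_type (overloaded) 'n qr = "('n::linorder) freering" / congC
  by (rule equivp_congC)

instantiation qr :: (linorder) ring_1
begin
lift_definition zero_qr :: "'a qr" is 0 .
lift_definition one_qr :: "'a qr" is 1 .
lift_definition plus_qr :: "'a qr \<Rightarrow> 'a qr \<Rightarrow> 'a qr" is "(+)"
proof -
  fix a a' b b' :: "'a freering"
  assume "congC a a'" "congC b b'"
  then have "(a - a') + (b - b') \<in> I_C" by (metis congC_def IC_add)
  moreover have "(a - a') + (b - b') = (a + b) - (a' + b')" by (simp add: algebra_simps)
  ultimately show "congC (a + b) (a' + b')" by (simp add: congC_def)
qed
lift_definition uminus_qr :: "'a qr \<Rightarrow> 'a qr" is "uminus"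
proof -
  fix a a' :: "'a freering"
  assume "congC a a'"
  then have "- (a - a') \<in> I_C" by (metis congC_def IC_uminus)
  moreover have "- (a - a') = (- a) - (- a')" by (simp add: algebra_simps)
  ultimately show "congC (- a) (- a')" by (simp add: congC_def)
qed
lift_definition minus_qr :: "'a qr \<Rightarrow> 'a qr \<Rightarrow> 'a qr" is "(-)"
proof -
  fix a a' b b' :: "'a freering"
  assume "congC a a'" "congC b b'"
  then have "(a - a') - (b - b') \<in> I_C" by (metis congC_def IC_diff)
  moreover have "(a - a') - (b - b') = (a - b) - (a' - b')" by (simp add: algebra_simps)
  ultimately show "congC (a - b) (a' - b')" by (simp add: congC_def)
qed
lift_definition times_qr :: "'a qr \<Rightarrow> 'a qr \<Rightarrow> 'a qr" is "(*)"
proof -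
  fix a a' b b' :: "'a freering"
  assume "congC a a'" "congC b b'"
  then have "(a - a') * b + a' * (b - b') \<in> I_C" by (metis congC_def IC_add IC_multL IC_multR)
  moreover have "(a - a') * b + a' * (b - b') = a * b - a' * b'" by (simp add: algebra_simps)
  ultimately show "congC (a * b) (a' * b')" by (simp add: congC_def)
qed
instance
proof
  fix a b c :: "'a qr"
  show "a * b * c = a * (b * c)" by transfer (simp add: congC_def IC_0 mult.assoc)
  show "1 * a = a" by transfer (simp add: congC_def IC_0)
  show "a * 1 = a" by transfer (simp add: congC_def IC_0)
  show "(a + b) * c = a * c + b * c" by transfer (simp add: congC_def IC_0 distrib_right)
  show "a * (b + c) = a * b + a * c" by transfer (simp add: congC_def IC_0 distrib_left)
  show "a + b + c = a + (b + c)" by transfer (simp add: congC_def IC_0 add.assoc)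
  show "a + b = b + a" by transfer (simp add: congC_def IC_0 add.commute)
  show "0 + a = a" by transfer (simp add: congC_def IC_0)
  show "- a + a = 0" by transfer (simp add: congC_def IC_0)
  show "a - b = a + - b" by transfer (simp add: congC_def IC_0)
  show "(0::'a qr) \<noteq> 1" by transfer (metis congC_def one_notin_IC IC_uminus diff_0 minus_minus)
qed
end


definition cm :: "('n \<Rightarrow> 'r::ring_1) \<Rightarrow> 'n \<Rightarrow> 'n \<Rightarrow> 'r" where
  "cm w i j = w i * w j - w j * w i"

definition rels :: "('n::linorder \<Rightarrow> 'r::ring_1) \<Rightarrow> bool" where
  "rels w \<longleftrightarrow> (\<forall>a b. a < b \<longrightarrow> w b * cm w b a = cm w b a * w a)
     \<and> (\<forall>a b c. a < b \<and> b < c \<longrightarrow> w b * cm w c a = cm w c a * w b)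
     \<and> (\<forall>a b c. a < b \<and> b < c \<longrightarrow> cm w c b * cm w c a = 0)"

definition central :: "'r::ring_1 \<Rightarrow> bool" where
  "central t \<longleftrightarrow> (\<forall>z. t * z = z * t)"

lemma centralD1: "central t \<Longrightarrow> z * t = t * z"
  by (simp add: central_def)
lemma centralD2: "central t \<Longrightarrow> z * (t * q) = t * (z * q)"
  by (metis central_def mult.assoc)

fun Eg :: "('n \<Rightarrow> 'r::ring_1) \<Rightarrow> 'r \<Rightarrow> 'n list \<Rightarrow> 'r" where
  "Eg w t [] = 1"
| "Eg w t (a # L) = Eg w t L * (1 + t * w a)"

lemma Eg_snoc: "Eg w t (L @ [m]) = (1 + t * w m) * Eg w t L"
  by (induction L) (simp_all add: mult.assoc)

lemma Eg_comm:
  assumes "\<And>b. b \<in> set L \<Longrightarrow> z * w b = w b * z" "central t"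
  shows "Eg w t L * z = z * Eg w t L"
  using assms(1)
proof (induction L)
  case Nil then show ?case by simp
next
  case (Cons a L)
  have za: "z * w a = w a * z" using Cons.prems by simp
  have "(1 + t * w a) * z = z * (1 + t * w a)"
    using za centralD1[OF assms(2)] centralD2[OF assms(2)]
    by (simp add: algebra_simps flip: za)
  then have "Eg w t L * (1 + t * w a) * z = Eg w t L * z * (1 + t * w a)"
    by (simp add: mult.assoc)
  also have "\<dots> = z * Eg w t L * (1 + t * w a)" using Cons by simp
  finally show ?case by (simp add: mult.assoc)
qed

lemma F3:
  assumes r: "rels w" and t: "central t" and L: "\<forall>b\<in>set L. a < b \<and> b < m"
  shows "w m * Eg w t L * cm w m a = Eg w t L * w m * cm w m a"
  using L
proof (induction L)
  case Nil then show ?case by simp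
next
  case (Cons b L)
  let ?c = "cm w m a" and ?B = "Eg w t L"
  have ab: "a < b" "b < m" using Cons.prems by auto
  have R2: "w b * ?c = ?c * w b" using r ab unfolding rels_def by blast
  have R3: "cm w m b * ?c = 0" using r ab unfolding rels_def by blast
  have IH: "w m * ?B * ?c = ?B * w m * ?c" using Cons by simp
  have bc: "(1 + t * w b) * ?c = ?c * (1 + t * w b)"
    using centralD1[OF t] centralD2[OF t] R2
    by (simp add: algebra_simps flip: R2)
  have com: "w m * (1 + t * w b) = (1 + t * w b) * w m + t * cm w m b"
    using centralD1[OF t] centralD2[OF t] by (simp add: algebra_simps cm_def)
  have "w m * (?B * (1 + t * w b)) * ?c = w m * ?B * ?c * (1 + t * w b)"
    by (simp add: mult.assoc bc)
  also have "\<dots> = ?B * w m * ?c * (1 + t * w b)" by (simp add: IH)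
  also have "\<dots> = ?B * (w m * (1 + t * w b)) * ?c"
    by (simp add: mult.assoc bc)
  also have "\<dots> = ?B * (1 + t * w b) * w m * ?c + ?B * t * (cm w m b * ?c)"
    using centralD1[OF t] centralD2[OF t] by (simp add: com algebra_simps cm_def)
  also have "\<dots> = ?B * (1 + t * w b) * w m * ?c" by (simp add: R3)
  finally show ?case by (simp add: mult.assoc)
qed

definition Cs :: "('n \<Rightarrow> 'r::ring_1) \<Rightarrow> 'n list \<Rightarrow> 'n \<Rightarrow> 'r" where
  "Cs w L m = sum_list (map (\<lambda>a. w a * w m - w m * w a) L)"

lemma Llem:
  assumes r: "rels w" and t: "central t" and s: "sorted_wrt (<) L" and L: "\<forall>b\<in>set L. b < m"
  shows "(1 + t * w m) * Eg w t L * w m = ((1 + t * w m) * w m + t * Cs w L m) * Eg w t L"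
  using s L
proof (induction L)
  case Nil then show ?case by (simp add: Cs_def algebra_simps)
next
  case (Cons a L)
  let ?c = "cm w m a" and ?B = "Eg w t L" and ?u = "w m" and ?a = "w a"
  have am: "a < m" using Cons.prems by simp
  have L': "\<forall>b\<in>set L. a < b \<and> b < m" using Cons.prems by auto
  have IH: "(1 + t * ?u) * ?B * ?u = ((1 + t * ?u) * ?u + t * Cs w L m) * ?B"
    using Cons by simp
  have R1: "?u * ?c = ?c * ?a" using r am unfolding rels_def by blast
  have F1: "?B * ?c = ?c * ?B"
  proof (rule Eg_comm[OF _ t])
    fix b assume "b \<in> set L"
    then have "a < b" "b < m" using L' by auto
    then show "?c * w b = w b * ?c" using r unfolding rels_def by metis
  qed
  have F3': "?u * ?B * ?c = ?B * ?u * ?c" using F3[OF r t L'] .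
  have F2: "?c * (1 + t * ?a) = (1 + t * ?u) * ?c"
    using centralD1[OF t] centralD2[OF t] by (simp add: algebra_simps flip: R1)
  have s4: "(1 + t * ?u) * ?B * ?c = ?c * ?B * (1 + t * ?a)"
  proof -
    have "?c * ?B * (1 + t * ?a) = ?B * (?c * (1 + t * ?a))" by (simp add: F1 flip: mult.assoc)
    also have "\<dots> = ?B * ?c + t * (?B * ?u * ?c)"
      using centralD1[OF t] centralD2[OF t] by (simp add: F2 algebra_simps flip: R1)
    also have "\<dots> = ?B * ?c + t * (?u * ?B * ?c)" by (simp add: F3')
    finally show ?thesis by (simp add: algebra_simps)
  qed
  have s1: "(1 + t * ?a) * ?u = ?u * (1 + t * ?a) - t * ?c"
    using centralD1[OF t] centralD2[OF t] by (simp add: algebra_simps cm_def)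
  have "(1 + t * ?u) * Eg w t (a # L) * ?u = (1 + t * ?u) * ?B * ((1 + t * ?a) * ?u)"
    by (simp add: mult.assoc)
  also have "\<dots> = (1 + t * ?u) * ?B * ?u * (1 + t * ?a) - t * ((1 + t * ?u) * ?B * ?c)"
    using centralD1[OF t] centralD2[OF t] unfolding s1 by (simp add: right_diff_distrib mult.assoc centralD2[OF t])
  also have "\<dots> = ((1 + t * ?u) * ?u + t * Cs w L m) * ?B * (1 + t * ?a) - t * (?c * ?B * (1 + t * ?a))"
    by (simp only: IH s4)
  also have "\<dots> = ((1 + t * ?u) * ?u + t * Cs w (a # L) m) * Eg w t (a # L)"
  proof -
    have Ccons: "t * Cs w (a # L) m = t * Cs w L m - t * ?c" by (simp add: Cs_def cm_def algebra_simps)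
    show ?thesis by (simp add: Ccons algebra_simps)
  qed
  finally show ?case .
qed

lemma Ecomm:
  assumes r: "rels w" and x: "central x" and y: "central y" and s: "sorted_wrt (<) L"
  shows "Eg w x L * Eg w y L = Eg w y L * Eg w x L"
  using s
proof (induction L rule: rev_induct)
  case Nil then show ?case by simp
next
  case (snoc m L)
  have sL: "sorted_wrt (<) L" and Lm: "\<forall>b\<in>set L. b < m" using snoc.prems by (auto simp: sorted_wrt_append)
  have IH: "Eg w x L * Eg w y L = Eg w y L * Eg w x L" using snoc sL by simp
  let ?u = "w m" and ?C = "Cs w L m"
  define S where "S p q = 1 + p * ?u + q * ((1 + p * ?u) * ?u) + q * (p * ?C)" for p q
  have key: "(1 + p * ?u) * Eg w p L * (1 + q * ?u) = S p q * Eg w p L"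
    if p: "central p" and q: "central q" for p q
  proof -
    have "(1 + p * ?u) * Eg w p L * (1 + q * ?u) = (1 + p * ?u) * Eg w p L + q * ((1 + p * ?u) * Eg w p L * ?u)"
      by (simp add: distrib_left mult.assoc centralD2[OF q])
    also have "\<dots> = (1 + p * ?u) * Eg w p L + q * (((1 + p * ?u) * ?u + p * ?C) * Eg w p L)"
      by (simp only: Llem[OF r p sL Lm])
    also have "\<dots> = S p q * Eg w p L"
      by (simp add: S_def algebra_simps)
    finally show ?thesis .
  qed
  have Ssym: "S x y = S y x"
  proof -
    have h: "y * (x * z) = x * (y * z)" for z using centralD2[OF x] by simp
    have Sexp: "S p q = 1 + p * ?u + q * ?u + q * (p * (?u * ?u)) + q * (p * ?C)" for p q
      by (simp add: S_def algebra_simps)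
    show ?thesis by (simp add: Sexp h add_ac)
  qed
  have "Eg w x (L @ [m]) * Eg w y (L @ [m]) = ((1 + x * ?u) * Eg w x L * (1 + y * ?u)) * Eg w y L"
    by (simp add: Eg_snoc mult.assoc)
  also have "\<dots> = S x y * (Eg w x L * Eg w y L)" unfolding key[OF x y] by (simp add: mult.assoc)
  also have "\<dots> = S y x * (Eg w y L * Eg w x L)" by (simp add: Ssym IH)
  also have "\<dots> = ((1 + y * ?u) * Eg w y L * (1 + x * ?u)) * Eg w x L" unfolding key[OF y x] by (simp add: mult.assoc)
  also have "\<dots> = Eg w y (L @ [m]) * Eg w x (L @ [m])" by (simp add: Eg_snoc mult.assoc)
  finally show ?case .
qed



definition geo :: "'r::ring_1 \<Rightarrow> 'r fps" where "geo c = Abs_fps (\<lambda>k. c ^ k)"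

fun Hg :: "('n \<Rightarrow> 'r::ring_1) \<Rightarrow> 'n list \<Rightarrow> 'r fps" where
  "Hg w [] = 1"
| "Hg w (a # L) = geo (w a) * Hg w L"

lemma geo_inv1: "geo c * (1 + (- fps_X) * fps_const c) = 1"
proof (rule fps_ext)
  fix n
  have "geo c * (1 + (- fps_X) * fps_const c) = geo c - fps_X * (geo c * fps_const c)"
    by (simp add: algebra_simps fps_mult_fps_X_commute)
  moreover have "fps_nth (geo c * fps_const c) k = c ^ Suc k" for k
    by (simp add: fps_const_mult_right geo_def power_commutes)
  ultimately show "fps_nth (geo c * (1 + (- fps_X) * fps_const c)) n = fps_nth (1 :: 'a fps) n"
    by (cases n) (simp_all add: geo_def)
qed

lemma geo_inv2: "(1 + (- fps_X) * fps_const c) * geo c = 1"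
proof (rule fps_ext)
  fix n
  have "(1 + (- fps_X) * fps_const c) * geo c = geo c - fps_X * (fps_const c * geo c)"
    by (simp add: algebra_simps)
  moreover have "fps_nth (fps_const c * geo c) k = c ^ Suc k" for k
    by (simp add: geo_def)
  ultimately show "fps_nth ((1 + (- fps_X) * fps_const c) * geo c) n = fps_nth (1 :: 'a fps) n"
    by (cases n) (simp_all add: geo_def)
qed

abbreviation Ef :: "('n \<Rightarrow> 'r::ring_1) \<Rightarrow> 'n list \<Rightarrow> 'r fps" where
  "Ef w L \<equiv> Eg (\<lambda>a. fps_const (w a)) (- fps_X) L"

lemma HE1: "Hg w L * Ef w L = 1"
proof (induction L)
  case Nil then show ?case by simp
next
  case (Cons a L)
  have "Hg w (a # L) * Ef w (a # L) = geo (w a) * (Hg w L * Ef w L) * (1 + (- fps_X) * fps_const (w a))"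
    by (simp add: mult.assoc)
  also have "\<dots> = 1" using Cons geo_inv1[of "w a"] by simp
  finally show ?case .
qed

lemma HE2: "Ef w L * Hg w L = 1"
proof (induction L)
  case Nil then show ?case by simp
next
  case (Cons a L)
  have "Ef w (a # L) * Hg w (a # L) = Ef w L * ((1 + (- fps_X) * fps_const (w a)) * geo (w a)) * Hg w L"
    by (simp add: mult.assoc)
  also have "\<dots> = 1" using Cons geo_inv2[of "w a"] by simp
  finally show ?case .
qed

definition SL :: "'n::linorder list \<Rightarrow> nat \<Rightarrow> 'n list set" where
  "SL L n = {xs. length xs = n \<and> sorted xs \<and> set xs \<subseteq> set L}"

lemma finite_SL: "finite (SL L n)"
proof -
  have "SL L n \<subseteq> {xs. set xs \<subseteq> set L \<and> length xs = n}" by (auto simp: SL_def)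
  then show ?thesis using finite_lists_length_eq[of "set L" n] by (rule finite_subset) simp
qed

lemma rep_inj:
  "a \<notin> set ys \<Longrightarrow> a \<notin> set ys' \<Longrightarrow> replicate i a @ ys = replicate j a @ ys' \<Longrightarrow> i = j \<and> ys = ys'"
proof (induction i arbitrary: j)
  case 0 then show ?case by (cases j) auto
next
  case (Suc i) then show ?case by (cases j) auto
qed

lemma dropWhile_ne:
  "sorted xs \<Longrightarrow> \<forall>z\<in>set xs. a \<le> z \<Longrightarrow> y \<in> set (dropWhile (\<lambda>x. x = a) xs) \<Longrightarrow> y \<noteq> (a::'a::linorder)"
proof (induction xs)
  case Nil then show ?case by simp
next
  case (Cons x xs)
  show ?case
  proof (cases "x = a")
    case True then show ?thesis using Cons by simp
  next
    case False
    then have "a < x" using Cons.prems by auto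
    moreover have "y = x \<or> x \<le> y" using Cons.prems False by auto
    ultimately show ?thesis by auto
  qed
qed

lemma Hg_nth:
  assumes "sorted_wrt (<) L"
  shows "fps_nth (Hg w L) n = (\<Sum>xs\<in>SL L n. prod_list (map w xs))"
  using assms
proof (induction L arbitrary: n)
  case Nil
  have e0: "SL [] 0 = {[]}" and e1: "\<And>k. SL [] (Suc k) = {}" by (auto simp: SL_def)
  show ?case by (cases n) (simp_all only: e0 e1, simp_all)
next
  case (Cons a L)
  have sL: "sorted_wrt (<) L" and aL: "\<forall>b\<in>set L. a < b" using Cons.prems by auto
  define f where "f p = replicate (fst p) a @ snd p" for p :: "nat \<times> 'a list"
  let ?S = "Sigma {0..n} (\<lambda>i. SL L (n - i))"
  have bij: "bij_betw f ?S (SL (a # L) n)"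
  proof (rule bij_betw_imageI)
    show "inj_on f ?S"
    proof (rule inj_onI)
      fix p q assume p: "p \<in> ?S" and q: "q \<in> ?S" and e: "f p = f q"
      have "a \<notin> set (snd p)" "a \<notin> set (snd q)" using p q aL by (auto simp: SL_def)
      then have "fst p = fst q \<and> snd p = snd q" using e rep_inj[of a "snd p" "snd q" "fst p" "fst q"] unfolding f_def by simp
      then show "p = q" by (simp add: prod_eq_iff)
    qed
    show "f ` ?S = SL (a # L) n"
    proof
      show "f ` ?S \<subseteq> SL (a # L) n"
      proof
        fix xs assume "xs \<in> f ` ?S"
        then obtain i ys where i: "i \<le> n" and ys: "ys \<in> SL L (n - i)" and xs: "xs = replicate i a @ ys"
          by (auto simp: f_def)
        have ysL: "sorted ys" "set ys \<subseteq> set L" using ys by (auto simp: SL_def)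
        have "sorted (replicate i a @ ys)"
          unfolding sorted_append
        proof (intro conjI ballI)
          fix x y assume "x \<in> set (replicate i a)" "y \<in> set ys"
          then show "x \<le> y" using ysL aL by (auto intro: less_imp_le)
        qed (simp_all add: ysL)
        then show "xs \<in> SL (a # L) n" using i ys xs by (auto simp: SL_def)
      qed
      show "SL (a # L) n \<subseteq> f ` ?S"
      proof
        fix xs assume xs: "xs \<in> SL (a # L) n"
        define i where "i = length (takeWhile (\<lambda>x. x = a) xs)"
        define ys where "ys = dropWhile (\<lambda>x. x = a) xs"
        have tw: "takeWhile (\<lambda>x. x = a) xs = replicate i a"
          unfolding i_def by (rule replicate_length_same[symmetric]) (auto dest: set_takeWhileD)
        have xs_eq: "xs = replicate i a @ ys"
          using takeWhile_dropWhile_id[of "\<lambda>x. x = a" xs] tw ys_def by simp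
        have len: "length xs = n" "sorted xs" "set xs \<subseteq> insert a (set L)" using xs by (auto simp: SL_def)
        have ge: "\<forall>z\<in>set xs. a \<le> z" using len(3) aL by (auto intro: less_imp_le)
        have "set ys \<subseteq> set L"
        proof
          fix y assume y: "y \<in> set ys"
          then have "y \<noteq> a" using dropWhile_ne[OF len(2) ge, of y] ys_def by simp
          moreover have "y \<in> set xs" using y xs_eq by simp
          ultimately show "y \<in> set L" using len(3) by auto
        qed
        moreover have "sorted ys" using len(2) xs_eq by (simp add: sorted_append)
        moreover have "length ys = n - i" "i \<le> n" using len(1) xs_eq by auto
        ultimately have "(i, ys) \<in> ?S" by (auto simp: SL_def)
        moreover have "xs = f (i, ys)" using xs_eq by (simp add: f_def)
        ultimately show "xs \<in> f ` ?S" by blast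
      qed
    qed
  qed
  have "fps_nth (Hg w (a # L)) n = (\<Sum>i=0..n. w a ^ i * fps_nth (Hg w L) (n - i))"
    by (simp add: fps_mult_nth geo_def)
  also have "\<dots> = (\<Sum>i=0..n. \<Sum>ys\<in>SL L (n - i). w a ^ i * prod_list (map w ys))"
    using Cons.IH[OF sL] by (simp add: sum_distrib_left)
  also have "\<dots> = (\<Sum>(i, ys)\<in>?S. w a ^ i * prod_list (map w ys))"
    by (rule sum.Sigma) (simp_all add: finite_SL)
  also have "\<dots> = (\<Sum>p\<in>?S. prod_list (map w (f p)))"
    by (rule sum.cong) (auto simp: f_def prod_list_replicate)
  also have "\<dots> = (\<Sum>xs\<in>SL (a # L) n. prod_list (map w xs))"
    by (rule sum.reindex_bij_betw[OF bij])
  finally show ?case .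
qed



abbreviation phi :: "('n::linorder) freering \<Rightarrow> 'n qr" where "phi \<equiv> abs_qr"

lemma phi_add: "phi (a + b) = phi a + phi b" by (simp add: plus_qr.abs_eq)
lemma phi_mult: "phi (a * b) = phi a * phi b" by (simp add: times_qr.abs_eq)
lemma phi_diff: "phi (a - b) = phi a - phi b" by (simp add: minus_qr.abs_eq)
lemma phi_0: "phi 0 = 0" by (simp add: zero_qr.abs_eq)
lemma phi_1: "phi 1 = 1" by (simp add: one_qr.abs_eq)
lemma phi_zero_iff: "phi a = 0 \<longleftrightarrow> a \<in> I_C"
  by (simp add: zero_qr.abs_eq qr.abs_eq_iff congC_def)

lemma phi_sum: "phi (sum f A) = (\<Sum>x\<in>A. phi (f x))"
  by (induction A rule: infinite_finite_induct) (simp_all add: phi_0 phi_add)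

lemma phi_prod_list: "phi (prod_list xs) = prod_list (map phi xs)"
  by (induction xs) (simp_all add: phi_1 phi_mult)

definition wq :: "('n::linorder) \<Rightarrow> 'n qr" where "wq i = phi (u i)"

lemma gen_zero: "g \<in> gensC \<Longrightarrow> phi g = 0"
  using gensC_sub phi_zero_iff by blast

lemma rels_wq: "rels (wq :: ('n::linorder) \<Rightarrow> 'n qr)"
  unfolding rels_def
proof (intro conjI allI impI)
  fix a b :: 'n assume ab: "a < b"
  have "u b * u b * u a + u a * u b * u a - u b * u a * u b - u b * u a * u a \<in> gensC"
    unfolding gensC_def using ab by blast
  then have "phi (u b * u b * u a + u a * u b * u a - u b * u a * u b - u b * u a * u a) = 0" by (rule gen_zero)
  then have "wq b * wq b * wq a + wq a * wq b * wq a - wq b * wq a * wq b - wq b * wq a * wq a = 0"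
    by (simp add: phi_add phi_diff phi_mult wq_def)
  moreover have "wq b * cm wq b a - cm wq b a * wq a = wq b * wq b * wq a + wq a * wq b * wq a - wq b * wq a * wq b - wq b * wq a * wq a"
    by (simp add: cm_def algebra_simps)
  ultimately show "wq b * cm wq b a = cm wq b a * wq a" by simp
next
  fix a b c :: 'n assume abc: "a < b \<and> b < c"
  have "u b * u c * u a + u a * u c * u b - u b * u a * u c - u c * u a * u b \<in> gensC"
    unfolding gensC_def using abc by blast
  then have "phi (u b * u c * u a + u a * u c * u b - u b * u a * u c - u c * u a * u b) = 0" by (rule gen_zero)
  then have "wq b * wq c * wq a + wq a * wq c * wq b - wq b * wq a * wq c - wq c * wq a * wq b = 0"
    by (simp add: phi_add phi_diff phi_mult wq_def)
  moreover have "wq b * cm wq c a - cm wq c a * wq b = wq b * wq c * wq a + wq a * wq c * wq b - wq b * wq a * wq c - wq c * wq a * wq b"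
    by (simp add: cm_def algebra_simps)
  ultimately show "wq b * cm wq c a = cm wq c a * wq b" by simp
next
  fix a b c :: 'n assume abc: "a < b \<and> b < c"
  have "u c * u b * u c * u a + u b * u c * u a * u c - u c * u b * u a * u c - u b * u c * u c * u a \<in> gensC"
    unfolding gensC_def using abc by blast
  then have "phi (u c * u b * u c * u a + u b * u c * u a * u c - u c * u b * u a * u c - u b * u c * u c * u a) = 0" by (rule gen_zero)
  then have "wq c * wq b * wq c * wq a + wq b * wq c * wq a * wq c - wq c * wq b * wq a * wq c - wq b * wq c * wq c * wq a = 0"
    by (simp add: phi_add phi_diff phi_mult wq_def)
  moreover have "cm wq c b * cm wq c a = wq c * wq b * wq c * wq a + wq b * wq c * wq a * wq c - wq c * wq b * wq a * wq c - wq b * wq c * wq c * wq a"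
    by (simp add: cm_def algebra_simps)
  ultimately show "cm wq c b * cm wq c a = 0" by simp
qed

abbreviation Lall :: "('n::{finite,linorder}) list" where "Lall \<equiv> sorted_list_of_set UNIV"

lemma Lall_sorted: "sorted_wrt (<) (Lall :: ('n::{finite,linorder}) list)"
  by (simp add: strict_sorted_list_of_set)

lemma Hs_nth: "fps_nth (Hg wq (Lall :: ('n::{finite,linorder}) list)) k = phi (hsym k)"
proof -
  have "SL (Lall :: 'n list) k = {xs. length xs = k \<and> sorted xs}" by (auto simp: SL_def)
  then show ?thesis
    by (simp add: Hg_nth[OF Lall_sorted] hsym_def phi_sum phi_prod_list wq_def[abs_def] o_def)
qed

lemma inv_comm:
  fixes p p' q q' :: "'r::ring_1"
  assumes "p * p' = 1" "p' * p = 1" "q * q' = 1" "q' * q = 1" "p' * q' = q' * p'"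
  shows "p * q = q * p"
proof -
  have "(q' * p') * (p * q) = q' * ((p' * p) * q)" by (simp only: mult.assoc)
  also have "\<dots> = 1" using assms(2,4) by simp
  finally have e1: "(q' * p') * (p * q) = 1" .
  have "q * p = q * p * ((q' * p') * (p * q))" by (simp only: e1 mult_1_right)
  also have "\<dots> = q * p * ((p' * q') * (p * q))" by (simp only: assms(5))
  also have "\<dots> = q * (p * p') * (q' * (p * q))" by (simp only: mult.assoc)
  also have "\<dots> = q * (q' * (p * q))" using assms(1) by simp
  also have "\<dots> = (q * q') * (p * q)" by (simp only: mult.assoc)
  also have "\<dots> = p * q" using assms(3) by simp
  finally show ?thesis by simp
qed

lemma fps_const_sum: "fps_const (sum f A) = (\<Sum>x\<in>A. fps_const (f x))"
  by (induction A rule: infinite_finite_induct) (simp_all add: fps_const_add[symmetric] del: fps_const_add)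

lemma fps_const_m1: "fps_const (-1 :: 'a::ring_1) = -1"
  by (rule fps_ext) simp

definition Phx :: "'a::ring_1 fps \<Rightarrow> 'a fps fps" where
  "Phx f = Abs_fps (\<lambda>k. fps_const (fps_nth f k))"

lemma Phx_mult: "Phx (f * g) = Phx f * Phx g"
proof (rule fps_ext)
  fix n
  have "fps_nth (Phx f * Phx g) n = (\<Sum>i=0..n. fps_const (fps_nth f i) * fps_const (fps_nth g (n - i)))"
    by (simp add: fps_mult_nth Phx_def)
  also have "\<dots> = (\<Sum>i=0..n. fps_const (fps_nth f i * fps_nth g (n - i)))" by simp
  also have "\<dots> = fps_const (\<Sum>i=0..n. fps_nth f i * fps_nth g (n - i))"
    by (simp add: fps_const_sum)
  finally show "fps_nth (Phx (f * g)) n = fps_nth (Phx f * Phx g) n"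
    by (simp add: Phx_def fps_mult_nth)
qed

lemma Phx_add: "Phx (f + g) = Phx f + Phx g"
  by (rule fps_ext) (simp add: Phx_def)
lemma Phx_1: "Phx 1 = 1"
  by (rule fps_ext) (simp add: Phx_def)
lemma Phx_const: "Phx (fps_const c) = fps_const (fps_const c)"
  by (rule fps_ext) (simp add: Phx_def)
lemma Phx_mX: "Phx (- fps_X) = - fps_X"
  by (rule fps_ext) (simp add: Phx_def fps_X_def fps_const_m1)

lemma Eg_hom:
  assumes m: "\<And>a b. F (a * b) = F a * F b" and p: "\<And>a b. F (a + b) = F a + F b" and o: "F 1 = 1"
  shows "F (Eg w t L) = Eg (\<lambda>a. F (w a)) (F t) L"
  by (induction L) (simp_all add: m p o)

lemma central_mX: "central (- fps_X :: 'b::ring_1 fps)"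
  unfolding central_def by (simp add: fps_mult_fps_X_commute)

lemma central_const: "central c \<Longrightarrow> central (fps_const c)"
  unfolding central_def
  by (auto simp: fps_const_mult_left fps_const_mult_right intro!: fps_ext)

lemma rels_hom:
  assumes r: "rels w" and m: "\<And>a b. F (a * b) = F a * F b" and d: "\<And>a b. F (a - b) = F a - F b"
    and z: "F 0 = 0"
  shows "rels (\<lambda>i. F (w i))"
proof -
  have cmF: "cm (\<lambda>i. F (w i)) i j = F (cm w i j)" for i j by (simp add: cm_def m d)
  show ?thesis using r unfolding rels_def cmF by (simp add: flip: m z)
qed

lemma main_comm:
  "fps_nth (Hg wq (Lall :: ('n::{finite,linorder}) list)) a * fps_nth (Hg wq (Lall :: 'n list)) b
   = fps_nth (Hg wq (Lall :: 'n list)) b * fps_nth (Hg wq (Lall :: 'n list)) a"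
proof -
  define Hs where "Hs = Hg wq (Lall :: 'n list)"
  define Es where "Es = Ef wq (Lall :: 'n list)"
  define W where "W = (\<lambda>i. fps_const (fps_const (wq i)) :: 'n qr fps fps)"
  have relW: "rels W" unfolding W_def
    by (rule rels_hom[OF rels_wq]) simp_all
  have Ex: "Phx Es = Eg W (- fps_X) Lall"
    unfolding Es_def W_def by (simp add: Eg_hom[of Phx] Phx_mult Phx_add Phx_1 Phx_const Phx_mX)
  have Ey: "fps_const Es = Eg W (fps_const (- fps_X)) Lall"
    unfolding Es_def W_def by (simp add: Eg_hom[of fps_const])
  have cy: "central (fps_const (- fps_X) :: 'n qr fps fps)" by (rule central_const[OF central_mX])
  have EE: "Phx Es * fps_const Es = fps_const Es * Phx Es"
    unfolding Ex Ey by (rule Ecomm[OF relW central_mX cy Lall_sorted])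
  have "Phx Hs * fps_const Hs = fps_const Hs * Phx Hs"
  proof (rule inv_comm)
    show "Phx Hs * Phx Es = 1" by (simp add: Hs_def Es_def HE1 Phx_1 flip: Phx_mult)
    show "Phx Es * Phx Hs = 1" by (simp add: Hs_def Es_def HE2 Phx_1 flip: Phx_mult)
    show "fps_const Hs * fps_const Es = 1" by (simp add: Hs_def Es_def HE1)
    show "fps_const Es * fps_const Hs = 1" by (simp add: Hs_def Es_def HE2)
  qed (rule EE)
  then have "fps_nth (fps_nth (Phx Hs * fps_const Hs) a) b = fps_nth (fps_nth (fps_const Hs * Phx Hs) a) b"
    by simp
  then show ?thesis
    by (simp add: Hs_def Phx_def fps_const_mult_right)
qed



theorem corollary2p4:
  fixes I :: "('n::{finite,linorder}) freering set"
  assumes "two_sided_ideal I" and "I_C \<subseteq> I"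
  shows "(\<forall>k l. 1 \<le> k \<longrightarrow> 1 \<le> l \<longrightarrow> hsym k * hsym l - hsym l * hsym k \<in> I)
       \<and> (\<forall>a b. fps_nth (fps_nth ((Hx :: 'n freering fps fps) * Hy - Hy * Hx) a) b \<in> I)"
proof -
  have key: "hsym k * hsym l - hsym l * hsym k \<in> I" for k l :: nat
  proof -
    have "phi (hsym k :: 'n freering) * phi (hsym l) = phi (hsym l) * phi (hsym k)"
      using main_comm[of k l, where 'n='n] by (simp add: Hs_nth)
    then have "phi (hsym k * hsym l - hsym l * hsym k :: 'n freering) = 0"
      by (simp add: phi_diff phi_mult)
    then show ?thesis using assms(2) phi_zero_iff by blast
  qed
  have coeff: "fps_nth (fps_nth ((Hx :: 'n freering fps fps) * Hy - Hy * Hx) a) b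
      = hsym a * hsym b - hsym b * hsym a" for a b
    by (simp add: Hx_def Hy_def fps_const_mult_right)
  show ?thesis using key coeff by simp
qed


end
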